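(* There are absolute constants $c>0$ and $C$ such that for all $n$ the following holds. Let $A\subseteq\{0,1\}^n$ be random, each $x\in\{0,1\}^n$ included independently with probability $1/2$. Then with probability at least $1-2^{-2^{cn}}$ there exists an injective map $\phi_A\colon\{0,1\}^{n-1}\to\{0,1\}^n$ such that (1) for all $x\in\{0,1\}^{n-1}$, ${\sf dist}(x,\phi_A(x)_{[1,\dots,n-1]})\le 1$, and (2) $\Pr_{x\in\{0,1\}^{n-1}}[\phi_A(x)\in A]\ge 1-C/n$.
   Context: $z_{[1,\dots,n-1]}$ denotes the restriction of $z\in\{0,1\}^n$ to its first $n-1$ coordinates; ${\sf dist}$ is Hamming distance; $x$ is uniform in $\{0,1\}^{n-1}$. *)

theory Defs
  imports "HOL-Probability.Probability"
begin

definition cube :: "nat \<Rightarrow> bool list set" where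
  "cube n = {xs. length xs = n}"

text \<open>Hamming distance between two lists (intended for lists of equal length).\<close>
definition hamming :: "bool list \<Rightarrow> bool list \<Rightarrow> nat" where
  "hamming xs ys = card {i. i < length xs \<and> xs ! i \<noteq> ys ! i}"

end

theory Submission
  imports Defs
begin

lemma cube_Suc: "cube (Suc n) = Cons True ` cube n \<union> Cons False ` cube n"
  unfolding cube_def
  by (auto simp: length_Suc_conv image_iff)

lemma cube_0: "cube 0 = {[]}" by (auto simp: cube_def)

lemma finite_cube[simp]: "finite (cube n)"
  by (induction n) (auto simp: cube_Suc cube_0)

lemma card_cube: "card (cube n) = 2^n"
proof (induction n)
  case 0 then show ?case by (simp add: cube_0)
next
  case (Suc n)
  have "card (cube (Suc n)) = card (Cons True ` cube n) + card (Cons False ` cube n)"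
    unfolding cube_Suc by (rule card_Un_disjoint) auto
  also have "\<dots> = 2 * 2^n" using Suc by (simp add: card_image)
  finally show ?case by simp
qed

lemma cube_ne[simp]: "cube n \<noteq> {}"
  using card_cube[of n] by (metis card.empty power_not_zero zero_neq_numeral)

lemma sum_Pow_cube_Suc:
  "(\<Sum>A\<in>Pow (cube (Suc n)). F {w. True#w \<in> A} {w. False#w \<in> A}) =
   (\<Sum>A1\<in>Pow (cube n). \<Sum>A2\<in>Pow (cube n). F A1 A2)"
proof -
  define g where "g = (\<lambda>(A1::bool list set, A2::bool list set). Cons True ` A1 \<union> Cons False ` A2)"
  have bij: "bij_betw g (Pow (cube n) \<times> Pow (cube n)) (Pow (cube (Suc n)))"
  proof (rule bij_betw_byWitness[where f' = "\<lambda>A. ({w. True#w \<in> A}, {w. False#w \<in> A})"])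
    show "\<forall>a\<in>Pow (cube n) \<times> Pow (cube n). ({w. True # w \<in> g a}, {w. False # w \<in> g a}) = a"
      by (auto simp: g_def)
    show "\<forall>a'\<in>Pow (cube (Suc n)). g ({w. True # w \<in> a'}, {w. False # w \<in> a'}) = a'"
      by (auto simp: g_def cube_Suc image_iff)
    show "g ` (Pow (cube n) \<times> Pow (cube n)) \<subseteq> Pow (cube (Suc n))"
      by (auto simp: g_def cube_Suc)
    show "(\<lambda>A. ({w. True # w \<in> A}, {w. False # w \<in> A})) ` Pow (cube (Suc n)) \<subseteq> Pow (cube n) \<times> Pow (cube n)"
      by (auto simp: cube_def)
  qed
  have "(\<Sum>A\<in>Pow (cube (Suc n)). F {w. True#w \<in> A} {w. False#w \<in> A}) =
        (\<Sum>p\<in>Pow (cube n) \<times> Pow (cube n). F {w. True#w \<in> g p} {w. False#w \<in> g p})"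
    using sum.reindex_bij_betw[OF bij, of "\<lambda>A. F {w. True#w \<in> A} {w. False#w \<in> A}"] by simp
  also have "\<dots> = (\<Sum>p\<in>Pow (cube n) \<times> Pow (cube n). F (fst p) (snd p))"
  proof (rule sum.cong)
    fix p assume "p \<in> Pow (cube n) \<times> Pow (cube n)"
    have "{w. True#w \<in> g p} = fst p" "{w. False#w \<in> g p} = snd p"
      by (auto simp: g_def split: prod.splits)
    then show "F {w. True#w \<in> g p} {w. False#w \<in> g p} = F (fst p) (snd p)" by simp
  qed simp
  also have "\<dots> = (\<Sum>A1\<in>Pow (cube n). \<Sum>A2\<in>Pow (cube n). F A1 A2)"
    by (simp add: sum.cartesian_product split_beta)
  finally show ?thesis .
qed

datatype lab = UP | AR | DN

definition sub :: "bool \<Rightarrow> bool list set \<Rightarrow> bool list set" where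
  "sub b A = {w. b#w \<in> A}"

definition init :: "bool list set \<Rightarrow> bool list \<Rightarrow> lab" where
  "init A u = (if u@[True] \<in> A \<and> u@[False] \<in> A then AR
               else if u@[True] \<notin> A \<and> u@[False] \<notin> A then UP else DN)"

fun st :: "nat \<Rightarrow> bool list set \<Rightarrow> bool list \<Rightarrow> lab" where
  "st 0 A [] = init A []"
| "st 0 A (b#u) = DN"
| "st (Suc k) A [] = DN"
| "st (Suc k) A (b#u) = (let s = st k (sub b A) u; t = st k (sub (\<not>b) A) u in
     if (s = UP \<and> t = AR) \<or> (s = AR \<and> t = UP) then DN else s)"

fun mt :: "nat \<Rightarrow> bool list set \<Rightarrow> bool list \<Rightarrow> bool list option" where
  "mt 0 A u = None"
| "mt (Suc k) A [] = None"
| "mt (Suc k) A (b#u) = (case mt k (sub b A) u of Some w \<Rightarrow> Some (b#w)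
     | None \<Rightarrow> if st k (sub b A) u = UP \<and> st k (sub (\<not>b) A) u = AR then Some ((\<not>b)#u) else None)"

lemma init_sub: "init (sub b A) u = init A (b#u)"
  by (simp add: init_def sub_def)

lemma st_init: "(st k A u = UP \<longrightarrow> init A u = UP) \<and> (st k A u = AR \<longrightarrow> init A u = AR)"
proof (induction k arbitrary: A u)
  case 0 then show ?case by (cases u) auto
next
  case (Suc k)
  show ?case
  proof (cases u)
    case Nil then show ?thesis by simp
  next
    case (Cons b u0)
    then show ?thesis using Suc[of "sub b A" u0] by (auto simp: Let_def init_sub split: if_splits)
  qed
qed

lemma st_len: "st k A u \<noteq> DN \<Longrightarrow> length u = k"
proof (induction k arbitrary: A u)
  case 0 then show ?case by (cases u) auto
next
  case (Suc k)
  then show ?case by (cases u) (auto simp: Let_def split: if_splits)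
qed

lemma mt_shape: "mt k A u = Some w \<Longrightarrow> length u = k \<and> length w = k \<and> (\<exists>i<k. w = u[i := \<not> u!i])"
proof (induction k arbitrary: A u w)
  case 0 then show ?case by simp
next
  case (Suc k)
  show ?case
  proof (cases u)
    case Nil then show ?thesis using Suc.prems by simp
  next
    case (Cons b u0)
    show ?thesis
    proof (cases "mt k (sub b A) u0")
      case None
      then have "st k (sub b A) u0 = UP" "w = (\<not>b)#u0"
        using Suc.prems Cons by (auto split: if_splits)
      then show ?thesis using Cons st_len[of k "sub b A" u0] by (auto intro: exI[of _ 0])
    next
      case (Some w0)
      then have w: "w = b#w0" using Suc.prems Cons by simp
      from Suc.IH[OF Some] obtain i where "i < k" "w0 = u0[i := \<not> u0!i]" "length u0 = k" "length w0 = k" by blast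
      then show ?thesis using w Cons by (intro conjI exI[of _ "Suc i"]) auto
    qed
  qed
qed

lemma mt_init: "mt k A u = Some w \<Longrightarrow> init A u = UP \<and> init A w = AR"
proof (induction k arbitrary: A u w)
  case 0 then show ?case by simp
next
  case (Suc k)
  show ?case
  proof (cases u)
    case Nil then show ?thesis using Suc.prems by simp
  next
    case (Cons b u0)
    show ?thesis
    proof (cases "mt k (sub b A) u0")
      case None
      then have "st k (sub b A) u0 = UP" "st k (sub (\<not>b) A) u0 = AR" "w = (\<not>b)#u0"
        using Suc.prems Cons by (auto split: if_splits)
      then show ?thesis using st_init[of k "sub b A" u0] st_init[of k "sub (\<not>b) A" u0] Cons
        by (simp add: init_sub)
    next
      case (Some w0)
      then have w: "w = b#w0" using Suc.prems Cons by simp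
      from Suc.IH[OF Some] show ?thesis using w Cons by (simp add: init_sub)
    qed
  qed
qed

lemma st_UP: "length u = k \<Longrightarrow> st k A u = UP \<longleftrightarrow> init A u = UP \<and> mt k A u = None"
proof (induction k arbitrary: A u)
  case 0 then show ?case by simp
next
  case (Suc k)
  then obtain b u0 where u: "u = b#u0" and l: "length u0 = k" by (cases u) auto
  show ?case using Suc.IH[OF l, of "sub b A"] u
    by (auto simp: Let_def init_sub split: option.splits if_splits)
qed

lemma st_AR: "length u = k \<Longrightarrow> st k A u = AR \<longleftrightarrow> init A u = AR \<and> (\<forall>u'. mt k A u' \<noteq> Some u)"
proof (induction k arbitrary: A u)
  case 0 then show ?case by simp
next
  case (Suc k)
  then obtain b u0 where u: "u = b#u0" and l: "length u0 = k" by (cases u) auto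
  have IH: "st k (sub b A) u0 = AR \<longleftrightarrow> init A u \<noteq> UP \<and> init A u = AR \<and> (\<forall>u'. mt k (sub b A) u' \<noteq> Some u0)"
    using Suc.IH[OF l, of "sub b A"] u by (auto simp: init_sub)
  have UPt: "st k (sub (\<not>b) A) u0 = UP \<longleftrightarrow> init (sub (\<not>b) A) u0 = UP \<and> mt k (sub (\<not>b) A) u0 = None"
    using st_UP[OF l] by blast
  have ex: "(\<exists>u'. mt (Suc k) A u' = Some u) \<longleftrightarrow>
     (\<exists>u'. mt k (sub b A) u' = Some u0) \<or>
     (mt k (sub (\<not>b) A) u0 = None \<and> st k (sub (\<not>b) A) u0 = UP \<and> st k (sub b A) u0 = AR)"
  proof
    assume "\<exists>u'. mt (Suc k) A u' = Some u"
    then obtain u' where h: "mt (Suc k) A u' = Some u" by blast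
    then obtain c u'' where u': "u' = c#u''" by (cases u') auto
    show "(\<exists>u'. mt k (sub b A) u' = Some u0) \<or>
     (mt k (sub (\<not>b) A) u0 = None \<and> st k (sub (\<not>b) A) u0 = UP \<and> st k (sub b A) u0 = AR)"
    proof (cases "mt k (sub c A) u''")
      case None
      then show ?thesis using h u' u by (auto split: if_splits)
    next
      case (Some w0)
      then show ?thesis using h u' u by auto
    qed
  next
    assume "(\<exists>u'. mt k (sub b A) u' = Some u0) \<or>
     (mt k (sub (\<not>b) A) u0 = None \<and> st k (sub (\<not>b) A) u0 = UP \<and> st k (sub b A) u0 = AR)"
    then show "\<exists>u'. mt (Suc k) A u' = Some u"
    proof
      assume "\<exists>u'. mt k (sub b A) u' = Some u0"
      then obtain u' where "mt k (sub b A) u' = Some u0" by blast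
      then have "mt (Suc k) A (b#u') = Some u" using u by simp
      then show ?thesis by blast
    next
      assume h: "mt k (sub (\<not>b) A) u0 = None \<and> st k (sub (\<not>b) A) u0 = UP \<and> st k (sub b A) u0 = AR"
      then have "mt (Suc k) A ((\<not>b)#u0) = Some u" using u by simp
      then show ?thesis by blast
    qed
  qed
  show ?case
    using ex IH UPt u by (auto simp: Let_def)
qed

lemma mt_inj: "mt k A u1 = Some w \<Longrightarrow> mt k A u2 = Some w \<Longrightarrow> u1 = u2"
proof (induction k arbitrary: A u1 u2 w)
  case 0 then show ?case by simp
next
  case (Suc k)
  obtain c1 v1 where u1: "u1 = c1#v1" using Suc.prems by (cases u1) auto
  obtain c2 v2 where u2: "u2 = c2#v2" using Suc.prems by (cases u2) auto
  have old_new: False if o: "mt k (sub c A) v = Some w0" and n: "mt k (sub d A) v' = None"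
     "st k (sub d A) v' = UP" "st k (sub (\<not>d) A) v' = AR" and eq: "c#w0 = (\<not>d)#v'" for c d v v' w0
  proof -
    have "c = (\<not>d)" "w0 = v'" using eq by auto
    moreover have "length v' = k" using mt_shape[OF o] \<open>w0 = v'\<close> by simp
    ultimately show False using st_AR[of v' k "sub c A"] n o by auto
  qed
  show ?case
  proof (cases "mt k (sub c1 A) v1")
    case None1: None
    show ?thesis
    proof (cases "mt k (sub c2 A) v2")
      case None
      then show ?thesis using None1 Suc.prems u1 u2 by (auto split: if_splits)
    next
      case (Some w2)
      then show ?thesis using None1 Suc.prems u1 u2 old_new[OF Some, of c1 v1]
        by (auto split: if_splits)
    qed
  next
    case Some1: (Some w1)
    show ?thesis
    proof (cases "mt k (sub c2 A) v2")
      case None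
      then show ?thesis using Some1 Suc.prems u1 u2 old_new[OF Some1, of c2 v2]
        by (auto split: if_splits)
    next
      case (Some w2)
      then show ?thesis using Some1 Suc.prems u1 u2 Suc.IH[of "sub c1 A" v1 w1 v2]
        by auto
    qed
  qed
qed

fun sw :: "lab \<Rightarrow> lab" where "sw UP = AR" | "sw AR = UP" | "sw DN = DN"

lemma sub_compl: "sub b (cube (Suc (Suc k)) - A) = cube (Suc k) - sub b A"
  by (auto simp: sub_def cube_def)

lemma st_compl: "length u = k \<Longrightarrow> st k (cube (Suc k) - A) u = sw (st k A u)"
proof (induction k arbitrary: A u)
  case 0 then show ?case by (auto simp: init_def cube_def)
next
  case (Suc k)
  then obtain b u0 where u: "u = b#u0" and l: "length u0 = k" by (cases u) auto
  have sw_inj: "sw x = sw y \<longleftrightarrow> x = y" for x y by (cases x; cases y) auto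
  have [simp]: "sw x = UP \<longleftrightarrow> x = AR" "sw x = AR \<longleftrightarrow> x = UP" for x by (cases x; simp)+
  show ?case using Suc.IH[OF l, of "sub b A"] Suc.IH[OF l, of "sub (\<not>b) A"] u
    by (auto simp: Let_def sub_compl)
qed

definition PU :: "nat \<Rightarrow> bool list \<Rightarrow> real" where
  "PU k u = (\<Sum>A\<in>Pow (cube (Suc k)). if st k A u = UP then 1 else 0)"

lemma PA_eq: "length u = k \<Longrightarrow> (\<Sum>A\<in>Pow (cube (Suc k)). if st k A u = AR then 1 else 0 :: real) = PU k u"
proof -
  assume l: "length u = k"
  have e: "st k (cube (Suc k) - A) u = UP \<longleftrightarrow> st k A u = AR" for A
    using st_compl[OF l, of A] by (cases "st k A u") auto
  show ?thesis unfolding PU_def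
    by (rule sum.reindex_bij_witness[where i = "\<lambda>A. cube (Suc k) - A" and j = "\<lambda>A. cube (Suc k) - A"])
       (auto simp: e)
qed

lemma card_Pow_cube: "card (Pow (cube k)) = 2^(2^k)"
  by (simp add: card_Pow card_cube)

lemma sum_one_Pow: "(\<Sum>A\<in>Pow (cube k). 1::real) = 2^(2^k)"
  by (simp add: card_Pow_cube)

lemma PU_rec: assumes "length u = k"
  shows "PU (Suc k) (b#u) = PU k u * (2^(2^(Suc k)) - PU k u)"
proof -
  define T :: real where "T = 2^(2^(Suc k))"
  have notAR: "(\<Sum>A\<in>Pow (cube (Suc k)). if st k A u \<noteq> AR then 1 else 0 :: real) = T - PU k u"
  proof -
    have "(\<Sum>A\<in>Pow (cube (Suc k)). if st k A u \<noteq> AR then 1 else 0 :: real)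
        = (\<Sum>A\<in>Pow (cube (Suc k)). 1 - (if st k A u = AR then 1 else 0))"
      by (rule sum.cong) auto
    also have "\<dots> = T - PU k u" using PA_eq[OF assms]
      by (simp add: sum_subtractf card_Pow_cube T_def del: Pow_iff)
    finally show ?thesis .
  qed
  let ?I = "\<lambda>P. if P then 1 else 0 :: real"
  show ?thesis
  proof (cases b)
    case True
    have "PU (Suc k) (b#u) = (\<Sum>A\<in>Pow (cube (Suc (Suc k))).
        ?I (st k {w. True#w \<in> A} u = UP) * ?I (st k {w. False#w \<in> A} u \<noteq> AR))"
      unfolding PU_def using True by (intro sum.cong) (auto simp: Let_def sub_def)
    also have "\<dots> = (\<Sum>A1\<in>Pow (cube (Suc k)). \<Sum>A2\<in>Pow (cube (Suc k)).
        ?I (st k A1 u = UP) * ?I (st k A2 u \<noteq> AR))"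
      by (rule sum_Pow_cube_Suc)
    also have "\<dots> = (\<Sum>A1\<in>Pow (cube (Suc k)). ?I (st k A1 u = UP)) * (\<Sum>A2\<in>Pow (cube (Suc k)). ?I (st k A2 u \<noteq> AR))"
      by (simp add: sum_product)
    also have "\<dots> = PU k u * (T - PU k u)"
      using notAR by (simp add: PU_def)
    finally show ?thesis by (simp add: T_def)
  next
    case False
    have "PU (Suc k) (b#u) = (\<Sum>A\<in>Pow (cube (Suc (Suc k))).
        (\<lambda>A1 A2. ?I (st k A2 u = UP) * ?I (st k A1 u \<noteq> AR)) {w. True#w \<in> A} {w. False#w \<in> A})"
      unfolding PU_def using False by (intro sum.cong) (auto simp: Let_def sub_def)
    also have "\<dots> = (\<Sum>A1\<in>Pow (cube (Suc k)). \<Sum>A2\<in>Pow (cube (Suc k)).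
        ?I (st k A2 u = UP) * ?I (st k A1 u \<noteq> AR))"
      by (rule sum_Pow_cube_Suc)
    also have "\<dots> = (\<Sum>A2\<in>Pow (cube (Suc k)). ?I (st k A2 u = UP)) * (\<Sum>A1\<in>Pow (cube (Suc k)). ?I (st k A1 u \<noteq> AR))"
      by (subst sum.swap) (simp add: sum_product)
    also have "\<dots> = PU k u * (T - PU k u)"
      using notAR by (simp add: PU_def)
    finally show ?thesis by (simp add: T_def)
  qed
qed

lemma alg: fixes P T k :: real
  assumes "0 \<le> P" "P \<le> T/(k+4)" "0 < T" "0 \<le> k"
  shows "P*(T-P) \<le> T^2/(k+5)"
proof -
  define a where "a = T/(k+4)"
  have a: "P \<le> a" "a \<le> T/2" "0 \<le> a" using assms by (auto simp: a_def field_simps)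
  have "P*(T-P) \<le> a*(T-a)"
  proof -
    have "a*(T-a) - P*(T-P) = (a-P)*(T-a-P)" by (simp add: algebra_simps)
    also have "\<dots> \<ge> 0" using a by (intro mult_nonneg_nonneg) auto
    finally show ?thesis by simp
  qed
  also have "a*(T-a) = T^2*(k+3)/(k+4)^2" using assms
    by (simp add: a_def field_simps power2_eq_square)
  also have "\<dots> \<le> T^2/(k+5)"
  proof -
    have "(k+3)*(k+5) \<le> (k+4)^2" by (simp add: power2_eq_square algebra_simps)
    then have "(k+3)/(k+4)^2 \<le> 1/(k+5)" using assms by (simp add: field_simps)
    then show ?thesis using assms
      by (metis mult_left_mono times_divide_eq_right zero_le_power2 mult.right_neutral)
  qed
  finally show ?thesis .
qed

lemma PU_bound: "length u = k \<Longrightarrow> 0 \<le> PU k u \<and> PU k u \<le> 2^(2^(Suc k)) / (real k + 4)"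
proof (induction k arbitrary: u)
  case 0
  then have u: "u = []" by simp
  have "PU 0 u = (\<Sum>A\<in>{A\<in>Pow (cube (Suc 0)). st 0 A u = UP}. 1)"
    unfolding PU_def by (subst sum.inter_filter[symmetric]) auto
  also have "{A\<in>Pow (cube (Suc 0)). st 0 A u = UP} = {{}}"
  proof -
    have c1: "cube (Suc 0) = {[True],[False]}" by (auto simp: cube_Suc cube_0)
    have "A = {}" if "A \<subseteq> {[True],[False]}" "[True] \<notin> A" "[False] \<notin> A" for A
      using that by blast
    then show ?thesis unfolding c1 using u by (auto simp: init_def)
  qed
  finally show ?case by simp
next
  case (Suc k)
  then obtain b u0 where u: "u = b#u0" and l: "length u0 = k" by (cases u) auto
  define T :: real where "T = 2^(2^(Suc k))"
  have IH: "0 \<le> PU k u0" "PU k u0 \<le> T / (real k + 4)" using Suc.IH[OF l] by (auto simp: T_def)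
  have T: "0 < T" by (simp add: T_def)
  have "T / (real k + 4) \<le> T" using T by (simp add: divide_le_eq)
  then have le: "PU k u0 \<le> T" using IH by linarith
  have "PU (Suc k) u = PU k u0 * (T - PU k u0)" using PU_rec[OF l] u by (simp add: T_def)
  moreover have "PU k u0 * (T - PU k u0) \<le> T^2 / (real k + 5)"
    using alg[OF IH(1) IH(2) T] by simp
  moreover have "T^2 = 2^(2^(Suc (Suc k)))" by (simp add: T_def power_mult[symmetric] mult.commute)
  moreover have "0 \<le> PU k u0 * (T - PU k u0)" using IH le by simp
  ultimately show ?case by (simp add: add.commute)
qed

definition X :: "nat \<Rightarrow> bool list set \<Rightarrow> real" where
  "X K B = real (card {u\<in>cube K. st K B u = UP})"

lemma block_sum: "(\<Sum>B\<in>Pow (cube (Suc K)). X K B) \<le> 2^K * 2^(2^(Suc K)) / (real K + 4)"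
proof -
  have "(\<Sum>B\<in>Pow (cube (Suc K)). X K B) = (\<Sum>B\<in>Pow (cube (Suc K)). \<Sum>u\<in>cube K. if st K B u = UP then 1 else 0)"
    unfolding X_def by (intro sum.cong refl) (simp add: sum.inter_filter[symmetric])
  also have "\<dots> = (\<Sum>u\<in>cube K. PU K u)" unfolding PU_def by (rule sum.swap)
  also have "\<dots> \<le> (\<Sum>u\<in>cube K. 2^(2^(Suc K)) / (real K + 4))"
    by (intro sum_mono) (use PU_bound in \<open>auto simp: cube_def\<close>)
  also have "\<dots> = 2^K * 2^(2^(Suc K)) / (real K + 4)" by (simp add: card_cube)
  finally show ?thesis .
qed

definition blk :: "bool list \<Rightarrow> bool list set \<Rightarrow> bool list set" where
  "blk v A = {w. v@w \<in> A}"

lemma blk_Cons: "blk (c#v) A = blk v (sub c A)"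
  by (simp add: blk_def sub_def)

lemma blk_Nil: "blk [] A = A" by (simp add: blk_def)

lemma prod_lemma:
  fixes G :: "bool list set \<Rightarrow> real"
  shows "(\<Sum>A\<in>Pow (cube (j + Suc K)). \<Prod>v\<in>cube j. G (blk v A)) = (\<Sum>B\<in>Pow (cube (Suc K)). G B)^(2^j)"
proof (induction j)
  case 0 then show ?case by (simp add: cube_0 blk_Nil)
next
  case (Suc j)
  define H where "H = (\<lambda>A'. \<Prod>v\<in>cube j. G (blk v A'))"
  have split: "(\<Prod>v\<in>cube (Suc j). G (blk v A)) = H (sub True A) * H (sub False A)" for A
  proof -
    have "(\<Prod>v\<in>cube (Suc j). G (blk v A)) =
       (\<Prod>v\<in>Cons True ` cube j. G (blk v A)) * (\<Prod>v\<in>Cons False ` cube j. G (blk v A))"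
      unfolding cube_Suc by (rule prod.union_disjoint) auto
    also have "\<dots> = H (sub True A) * H (sub False A)"
      unfolding H_def by (simp add: prod.reindex blk_Cons)
    finally show ?thesis .
  qed
  have "(\<Sum>A\<in>Pow (cube (Suc j + Suc K)). \<Prod>v\<in>cube (Suc j). G (blk v A))
      = (\<Sum>A\<in>Pow (cube (Suc (j + Suc K))). H {w. True#w \<in> A} * H {w. False#w \<in> A})"
    by (simp add: split sub_def)
  also have "\<dots> = (\<Sum>A1\<in>Pow (cube (j + Suc K)). \<Sum>A2\<in>Pow (cube (j + Suc K)). H A1 * H A2)"
    by (rule sum_Pow_cube_Suc)
  also have "\<dots> = (\<Sum>A1\<in>Pow (cube (j + Suc K)). H A1) * (\<Sum>A2\<in>Pow (cube (j + Suc K)). H A2)"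
    by (simp add: sum_product)
  also have "\<dots> = (\<Sum>B\<in>Pow (cube (Suc K)). G B)^(2^(Suc j))"
    using Suc.IH unfolding H_def by (simp add: power_mult[symmetric] power2_eq_square[symmetric] mult.commute)
  finally show ?case .
qed

lemma powr_le_lin: fixes y :: real assumes "0 \<le> y" "y \<le> 1" shows "2 powr y \<le> 1 + y"
proof -
  have c: "convex_on UNIV (\<lambda>x. exp (ln 2 * x))" by (rule convex_on_exp) simp
  have "exp (ln 2 * ((1 - y) *\<^sub>R 0 + y *\<^sub>R 1)) \<le> (1 - y) * exp (ln 2 * 0) + y * exp (ln 2 * 1)"
    by (rule convex_onD[OF c]) (use assms in auto)
  then show ?thesis by (simp add: powr_def algebra_simps)
qed

lemma exp_le_powr: fixes x :: real assumes "0 \<le> x" shows "exp x \<le> 2 powr (2*x)"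
proof -
  have "x * (2/3) \<le> x * ln 2" using ln2_ge_two_thirds assms by (rule mult_left_mono)
  then have "x \<le> 2*x*ln 2" using assms by linarith
  then show ?thesis by (simp add: powr_def mult.commute)
qed

definition Z :: "nat \<Rightarrow> nat \<Rightarrow> bool list set \<Rightarrow> real" where
  "Z K j A = (\<Sum>v\<in>cube j. X K (blk v A) / 2^K)"

lemma X_le: "0 \<le> X K B \<and> X K B \<le> 2^K"
proof -
  have "card {u\<in>cube K. st K B u = UP} \<le> card (cube K)" by (rule card_mono) auto
  then show ?thesis by (simp add: X_def card_cube)
qed

lemma tail:
  "real (card {A\<in>Pow (cube (j + Suc K)). 3 * 2^j / (real K + 4) \<le> Z K j A})
     \<le> real (card (Pow (cube (j + Suc K)))) * 2 powr (- (2^j / (real K + 4)))"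
proof -
  define t :: real where "t = 3 * 2^j / (real K + 4)"
  define \<mu> :: real where "\<mu> = 1 / (real K + 4)"
  define T :: real where "T = 2^(2^(Suc K))"
  define N :: real where "N = 2^j"
  define Bad where "Bad = {A\<in>Pow (cube (j + Suc K)). t \<le> Z K j A}"
  have fin: "finite (Pow (cube (j + Suc K)))" by simp
  have "real (card Bad) * 2 powr t = (\<Sum>A\<in>Bad. 2 powr t)" by simp
  also have "\<dots> \<le> (\<Sum>A\<in>Bad. 2 powr Z K j A)"
    by (intro sum_mono) (auto simp: Bad_def)
  also have "\<dots> \<le> (\<Sum>A\<in>Pow (cube (j + Suc K)). 2 powr Z K j A)"
    by (rule sum_mono2[OF fin]) (auto simp: Bad_def)
  also have "\<dots> = (\<Sum>A\<in>Pow (cube (j + Suc K)). \<Prod>v\<in>cube j. 2 powr (X K (blk v A) / 2^K))"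
    unfolding Z_def by (simp add: powr_sum)
  also have "\<dots> = (\<Sum>B\<in>Pow (cube (Suc K)). 2 powr (X K B / 2^K))^(2^j)"
    by (rule prod_lemma)
  also have "\<dots> \<le> (T * (1 + \<mu>))^(2^j)"
  proof (rule power_mono)
    have "(\<Sum>B\<in>Pow (cube (Suc K)). 2 powr (X K B / 2^K)) \<le> (\<Sum>B\<in>Pow (cube (Suc K)). 1 + X K B / 2^K)"
      by (intro sum_mono powr_le_lin) (use X_le in auto)
    also have "\<dots> = T + (\<Sum>B\<in>Pow (cube (Suc K)). X K B) / 2^K"
      by (simp add: sum.distrib sum_divide_distrib[symmetric] card_Pow_cube T_def del: Pow_iff)
    also have "\<dots> \<le> T + (2^K * T / (real K + 4)) / 2^K"
      using block_sum[of K] by (intro add_left_mono divide_right_mono) (auto simp: T_def)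
    also have "\<dots> = T + T / (real K + 4)" by simp
    also have "\<dots> = T * (1 + \<mu>)" by (simp add: \<mu>_def algebra_simps)
    finally show "(\<Sum>B\<in>Pow (cube (Suc K)). 2 powr (X K B / 2^K)) \<le> T * (1 + \<mu>)" .
    show "0 \<le> (\<Sum>B\<in>Pow (cube (Suc K)). 2 powr (X K B / 2^K))" by (intro sum_nonneg) simp
  qed
  also have "\<dots> = T^(2^j) * (1 + \<mu>)^(2^j)" by (simp add: power_mult_distrib)
  also have "T^(2^j) = real (card (Pow (cube (j + Suc K))))"
    by (simp add: T_def card_Pow_cube power_mult[symmetric] power_add mult.commute)
  also have "(1 + \<mu>)^(2^j) \<le> exp \<mu> ^ (2^j)"
    by (intro power_mono) (auto simp: \<mu>_def)
  also have "exp \<mu> ^ (2^j) = exp (\<mu> * N)" by (simp add: N_def exp_of_nat_mult[symmetric] mult.commute)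
  also have "\<dots> \<le> 2 powr (2 * (\<mu> * N))" by (rule exp_le_powr) (simp add: \<mu>_def N_def)
  finally have *: "real (card Bad) * 2 powr t \<le> real (card (Pow (cube (j + Suc K)))) * 2 powr (2 * (\<mu> * N))"
    by (simp add: mult_left_mono)
  have t: "t = 3 * (\<mu> * N)" by (simp add: t_def \<mu>_def N_def)
  have "real (card Bad) \<le> real (card (Pow (cube (j + Suc K)))) * 2 powr (2 * (\<mu> * N)) / 2 powr t"
    using * by (simp add: field_simps)
  also have "\<dots> = real (card (Pow (cube (j + Suc K)))) * 2 powr (- (\<mu> * N))"
    unfolding t by (simp add: powr_diff[symmetric] divide_inverse powr_minus[symmetric] mult.assoc mult.commute flip: powr_add)
  finally show ?thesis by (simp add: Bad_def t_def \<mu>_def N_def)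
qed

definition phi :: "nat \<Rightarrow> nat \<Rightarrow> bool list set \<Rightarrow> bool list \<Rightarrow> bool list" where
  "phi K j A x = (case mt K (blk (take j x) A) (drop j x) of
      Some w \<Rightarrow> take j x @ w @ [False]
    | None \<Rightarrow> if x@[True] \<in> A then x@[True] else x@[False])"

lemma hamming_refl: "hamming x x = 0" by (simp add: hamming_def)

lemma hamming_upd: "hamming x (x[i := c]) \<le> 1"
proof -
  have sub: "{l. l < length x \<and> x ! l \<noteq> x[i := c] ! l} \<subseteq> {i}"
  proof (rule subsetI)
    fix l assume "l \<in> {l. l < length x \<and> x ! l \<noteq> x[i := c] ! l}"
    then have ne: "x ! l \<noteq> x[i := c] ! l" by blast
    show "l \<in> {i}"
    proof (rule ccontr)
      assume "l \<notin> {i}"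
      then have "i \<noteq> l" by blast
      then have "x[i := c] ! l = x ! l" by (rule nth_list_update_neq)
      then show False using ne by blast
    qed
  qed
  have "card {l. l < length x \<and> x ! l \<noteq> x[i := c] ! l} \<le> card {i}"
    using sub by (rule card_mono[rotated]) blast
  then show ?thesis unfolding hamming_def by simp
qed


lemma phi_props:
  assumes x: "x \<in> cube (j+K)"
  shows "phi K j A x \<in> cube (j+K+1)"
    and "hamming x (take (j+K) (phi K j A x)) \<le> 1"
    and "phi K j A x \<notin> A \<Longrightarrow> st K (blk (take j x) A) (drop j x) = UP"
proof -
  let ?v = "take j x" and ?u = "drop j x"
  have lx: "length x = j + K" using x by (simp add: cube_def)
  have xvu: "x = ?v @ ?u" by simp
  have lu: "length ?u = K" "length ?v = j" using lx by auto
  have init_blk: "init (blk ?v A) ?u = UP \<longleftrightarrow> x@[True] \<notin> A \<and> x@[False] \<notin> A"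
    by (simp add: init_def blk_def flip: append_assoc)
  show "phi K j A x \<in> cube (j+K+1)"
  proof (cases "mt K (blk ?v A) ?u")
    case None then show ?thesis using lx by (simp add: phi_def cube_def)
  next
    case (Some w) then show ?thesis using mt_shape[OF Some] lu by (simp add: phi_def cube_def)
  qed
  show "hamming x (take (j+K) (phi K j A x)) \<le> 1"
  proof (cases "mt K (blk ?v A) ?u")
    case None then show ?thesis using lx by (simp add: phi_def hamming_refl)
  next
    case (Some w)
    from mt_shape[OF Some] obtain i where i: "i < K" "w = ?u[i := \<not> ?u!i]" "length w = K" by blast
    have "take (j+K) (phi K j A x) = ?v @ w" using Some i lu by (simp add: phi_def)
    also have "\<dots> = x[j+i := \<not> x!(j+i)]"
    proof -
      have "x[j+i := \<not> x!(j+i)] = (?v @ ?u)[j+i := \<not> x!(j+i)]" by simp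
      also have "\<dots> = ?v @ ?u[i := \<not> x!(j+i)]" by (subst list_update_append) (simp add: lu lx)
      finally show ?thesis using i lu by simp
    qed
    finally have e: "take (j+K) (phi K j A x) = x[j+i := \<not> x!(j+i)]" .
    show ?thesis unfolding e by (rule hamming_upd)
  qed
  assume nA: "phi K j A x \<notin> A"
  show "st K (blk ?v A) ?u = UP"
  proof (cases "mt K (blk ?v A) ?u")
    case None
    then have "x@[True] \<notin> A \<and> x@[False] \<notin> A" using nA by (auto simp: phi_def split: if_splits)
    then show ?thesis using st_UP[OF lu(1)] None init_blk by simp
  next
    case (Some w)
    have "init (blk ?v A) w = AR" using mt_init[OF Some] by simp
    then have "?v @ w @ [False] \<in> A" by (simp add: init_def blk_def split: if_splits)
    then show ?thesis using nA Some by (simp add: phi_def)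
  qed
qed

lemma phi_inj: "inj_on (phi K j A) (cube (j+K))"
proof (rule inj_onI)
  fix x1 x2 assume x1: "x1 \<in> cube (j+K)" and x2: "x2 \<in> cube (j+K)" and eq: "phi K j A x1 = phi K j A x2"
  have l1: "length x1 = j+K" and l2: "length x2 = j+K" using x1 x2 by (auto simp: cube_def)
  have oneside: False if s: "mt K (blk (take j y1) A) (drop j y1) = Some w"
      and n: "mt K (blk (take j y2) A) (drop j y2) = None"
      and e: "take j y1 @ w @ [False] = (if y2@[True] \<in> A then y2@[True] else y2@[False])"
      and ly2: "length y2 = j+K" for y1 y2 w
  proof -
    have "init (blk (take j y1) A) w = AR" using mt_init[OF s] by simp
    then have a: "take j y1 @ w @ [True] \<in> A" by (simp add: init_def blk_def split: if_splits)
    have "y2 @ [True] \<in> A \<or> y2@[True] \<notin> A" by simp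
    then show False
    proof
      assume "y2 @ [True] \<in> A" then show False using e by simp
    next
      assume h: "y2 @ [True] \<notin> A"
      then have "take j y1 @ w @ [False] = y2 @ [False]" using e by simp
      then have "y2 = take j y1 @ w" by simp
      then show False using a h by simp
    qed
  qed
  show "x1 = x2"
  proof (cases "mt K (blk (take j x1) A) (drop j x1)")
    case N1: None
    show ?thesis
    proof (cases "mt K (blk (take j x2) A) (drop j x2)")
      case None then show ?thesis using N1 eq by (auto simp: phi_def split: if_splits)
    next
      case (Some w) then show ?thesis using oneside[OF Some N1 _ l1] N1 eq by (simp add: phi_def)
    qed
  next
    case S1: (Some w1)
    show ?thesis
    proof (cases "mt K (blk (take j x2) A) (drop j x2)")
      case None then show ?thesis using oneside[OF S1 None _ l2] S1 eq by (simp add: phi_def)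
    next
      case (Some w2)
      have lw: "length w1 = K" "length w2 = K" using mt_shape[OF S1] mt_shape[OF Some] by auto
      have "take j x1 @ w1 @ [False] = take j x2 @ w2 @ [False]" using eq S1 Some by (simp add: phi_def)
      then have tj: "take j x1 = take j x2" and w: "w1 = w2" using l1 l2 lw
        by (auto simp: append_eq_append_conv)
      have "drop j x1 = drop j x2" using mt_inj[OF S1] Some tj w by simp
      then show ?thesis using tj by (metis append_take_drop_id)
    qed
  qed
qed

lemma count_UP:
  "card {x\<in>cube (j+K). st K (blk (take j x) A) (drop j x) = UP} = 2^K * Z K j A"
proof -
  have eq: "{x\<in>cube (j+K). st K (blk (take j x) A) (drop j x) = UP} =
     (\<Union>v\<in>cube j. (\<lambda>u. v @ u) ` {u\<in>cube K. st K (blk v A) u = UP})"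
  proof (rule set_eqI, rule iffI)
    fix x assume "x \<in> {x\<in>cube (j+K). st K (blk (take j x) A) (drop j x) = UP}"
    then have h: "length x = j+K" "st K (blk (take j x) A) (drop j x) = UP" by (auto simp: cube_def)
    show "x \<in> (\<Union>v\<in>cube j. (\<lambda>u. v @ u) ` {u\<in>cube K. st K (blk v A) u = UP})"
    proof (rule UN_I[of "take j x"])
      show "take j x \<in> cube j" using h by (simp add: cube_def)
      show "x \<in> (\<lambda>u. take j x @ u) ` {u \<in> cube K. st K (blk (take j x) A) u = UP}"
        by (rule image_eqI[of _ _ "drop j x"]) (use h in \<open>auto simp: cube_def\<close>)
    qed
  next
    fix x assume "x \<in> (\<Union>v\<in>cube j. (\<lambda>u. v @ u) ` {u\<in>cube K. st K (blk v A) u = UP})"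
    then show "x \<in> {x\<in>cube (j+K). st K (blk (take j x) A) (drop j x) = UP}"
      by (auto simp: cube_def)
  qed
  have "card (\<Union>v\<in>cube j. (\<lambda>u. v @ u) ` {u\<in>cube K. st K (blk v A) u = UP})
      = (\<Sum>v\<in>cube j. card ((\<lambda>u. v @ u) ` {u\<in>cube K. st K (blk v A) u = UP}))"
  proof -
    have fin: "\<forall>v\<in>cube j. finite ((\<lambda>u. v @ u) ` {u \<in> cube K. st K (blk v A) u = UP})" by simp
    have dis: "\<forall>v\<in>cube j. \<forall>v'\<in>cube j. v \<noteq> v' \<longrightarrow>
       (\<lambda>u. v @ u) ` {u \<in> cube K. st K (blk v A) u = UP} \<inter> (\<lambda>u. v' @ u) ` {u \<in> cube K. st K (blk v' A) u = UP} = {}"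
      by (auto simp: cube_def)
    show ?thesis by (rule card_UN_disjoint[OF finite_cube fin dis])
  qed
  also have "\<dots> = (\<Sum>v\<in>cube j. card {u\<in>cube K. st K (blk v A) u = UP})"
    by (intro sum.cong refl card_image) (auto simp: inj_on_def)
  finally have "real (card {x\<in>cube (j+K). st K (blk (take j x) A) (drop j x) = UP})
      = (\<Sum>v\<in>cube j. X K (blk v A))" unfolding eq X_def by simp
  also have "\<dots> = 2^K * Z K j A" by (simp add: Z_def sum_divide_distrib[symmetric])
  finally show ?thesis .
qed

lemma pow_lin: "4 \<le> i \<Longrightarrow> 2*i+5 \<le> (2::nat)^i"
proof (induction i rule: nat_induct_at_least)
  case base then show ?case by simp
next
  case (Suc i) then show ?case by simp
qed

lemma exponent_bound:
  fixes n j K :: nat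
  assumes "40 \<le> n" "K = (n-1) div 2" "j = n - 1 - K"
  shows "2 powr (1/8 * real n) \<le> 2^j / (real K + 4)"
proof -
  define i where "i = j div 2"
  have r1: "n - 1 = 2*K + (n-1) mod 2" using assms(2) by simp
  have r2: "(n-1) mod 2 \<le> 1" by simp
  have r3: "j = 2*i + j mod 2" unfolding i_def by simp
  have r4: "j mod 2 \<le> 1" by simp
  have f1: "4 \<le> i" using assms(1,3) r1 r2 r3 r4 by linarith
  have f2: "K \<le> j" using assms(1,3) r1 r2 r3 r4 by linarith
  have f3: "j \<le> 2*i+1" using assms(1,3) r1 r2 r3 r4 by linarith
  have f4: "n \<le> 8*i" using assms(1,3) r1 r2 r3 r4 by linarith
  have f5: "2*i \<le> j" using assms(1,3) r1 r2 r3 r4 by linarith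
  note f = f1 f2 f3 f4 f5
  have "K + 4 \<le> 2^i" using pow_lin[OF f(1)] f by linarith
  then have k4: "real K + 4 \<le> 2^i" by (metis of_nat_add of_nat_le_iff of_nat_numeral of_nat_power)
  have "(2::real)^j = 2^i * 2^(j-i)" using f5 by (simp flip: power_add)
  also have "\<dots> \<ge> 2^i * 2^i" using f by (intro mult_left_mono power_increasing) auto
  finally have "2^i * (real K + 4) \<le> (2::real)^j"
    using k4 by (smt (verit) mult_left_mono zero_le_power)
  then have A: "2^i \<le> (2::real)^j / (real K + 4)" by (simp add: field_simps)
  have "2 powr (1/8 * real n) \<le> 2 powr (real i)" using f by (intro powr_mono) auto
  also have "\<dots> = 2^i" by (simp add: powr_realpow)
  finally show ?thesis using A by linarith
qed

lemma prob_set: "measure_pmf.prob (pmf_of_set (Pow (cube n))) E = real (card (Pow (cube n) \<inter> E)) / real (card (Pow (cube n)))"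
  by (rule measure_pmf_of_set) auto

lemma good_large:
  assumes n: "40 \<le> n" and K: "K = (n-1) div 2" and j: "j = n - 1 - K"
    and A: "A \<in> Pow (cube n)" and nb: "\<not> (3 * 2^j / (real K + 4) \<le> Z K j A)"
  shows "\<exists>\<phi> :: bool list \<Rightarrow> bool list.
            inj_on \<phi> (cube (n - 1)) \<and> \<phi> ` cube (n - 1) \<subseteq> cube n \<and>
            (\<forall>x\<in>cube (n - 1). hamming x (take (n - 1) (\<phi> x)) \<le> 1) \<and>
            measure_pmf.prob (pmf_of_set (cube (n - 1))) {x. \<phi> x \<in> A} \<ge> 1 - 40 / real n"
proof -
  have nm: "n - 1 = j + K" and nn: "n = j + K + 1" using n K j by auto
  let ?p = "phi K j A"
  have inj: "inj_on ?p (cube (n-1))" unfolding nm by (rule phi_inj)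
  have img: "?p ` cube (n-1) \<subseteq> cube n" unfolding nm using phi_props(1) nn by auto
  have ham: "\<forall>x\<in>cube (n - 1). hamming x (take (n - 1) (?p x)) \<le> 1"
    unfolding nm using phi_props(2) by auto
  let ?C = "cube (j+K)"
  have sub: "?C - (?C \<inter> {x. ?p x \<in> A}) \<subseteq> {x\<in>?C. st K (blk (take j x) A) (drop j x) = UP}"
    using phi_props(3) by auto
  have cd: "card (?C - (?C \<inter> {x. ?p x \<in> A})) = card ?C - card (?C \<inter> {x. ?p x \<in> A})"
    by (rule card_Diff_subset) auto
  have cl: "card (?C \<inter> {x. ?p x \<in> A}) \<le> card ?C" by (rule card_mono) auto
  have "card ?C \<le> card (?C \<inter> {x. ?p x \<in> A}) + card (?C - (?C \<inter> {x. ?p x \<in> A}))"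
    using cd cl by linarith
  also have "card (?C - (?C \<inter> {x. ?p x \<in> A})) \<le> card {x\<in>?C. st K (blk (take j x) A) (drop j x) = UP}"
    by (rule card_mono[OF _ sub]) simp
  finally have "real (card ?C) \<le> real (card (?C \<inter> {x. ?p x \<in> A})) + 2^K * Z K j A"
    using count_UP[of j K A] by linarith
  then have c: "2^(j+K) - 2^K * Z K j A \<le> real (card (?C \<inter> {x. ?p x \<in> A}))"
    by (simp add: card_cube)
  have "measure_pmf.prob (pmf_of_set ?C) {x. ?p x \<in> A} = real (card (?C \<inter> {x. ?p x \<in> A})) / 2^(j+K)"
    by (subst measure_pmf_of_set) (auto simp: card_cube)
  also have "\<dots> \<ge> (2^(j+K) - 2^K * Z K j A) / 2^(j+K)"
    using c by (intro divide_right_mono) auto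
  also have "(2^(j+K) - 2^K * Z K j A) / 2^(j+K) = 1 - Z K j A / 2^j"
    by (simp add: power_add field_simps)
  also have "1 - Z K j A / 2^j \<ge> 1 - 3 / (real K + 4)"
  proof -
    have "Z K j A \<le> 3 * 2^j / (real K + 4)" using nb by simp
    then have "Z K j A / 2^j \<le> 3 / (real K + 4)" by (simp add: field_simps)
    then show ?thesis by simp
  qed
  also have "1 - 3 / (real K + 4) \<ge> 1 - 40 / real n"
  proof -
    have "2*K + 2 \<ge> n" using K n by linarith
    then have "3 * n \<le> 40 * (K + 4)" by simp
    then have "real (3 * n) \<le> real (40 * (K + 4))" by (simp only: of_nat_le_iff)
    then have "3 * real n \<le> 40 * (real K + 4)" by simp
    then have "3 / (real K + 4) \<le> 40 / real n" using n by (simp add: field_simps)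
    then show ?thesis by simp
  qed
  finally show ?thesis using inj img ham unfolding nm by blast
qed

theorem mainTheorem9:
  shows "\<exists>c::real. \<exists>C::real. c > 0 \<and> (\<forall>n::nat. n \<ge> 1 \<longrightarrow>
    measure_pmf.prob (pmf_of_set (Pow (cube n)))
      {A. \<exists>\<phi> :: bool list \<Rightarrow> bool list.
            inj_on \<phi> (cube (n - 1)) \<and> \<phi> ` cube (n - 1) \<subseteq> cube n \<and>
            (\<forall>x\<in>cube (n - 1). hamming x (take (n - 1) (\<phi> x)) \<le> 1) \<and>
            measure_pmf.prob (pmf_of_set (cube (n - 1))) {x. \<phi> x \<in> A} \<ge> 1 - C / real n}
    \<ge> 1 - 2 powr (- (2 powr (c * real n))))"
proof (intro exI conjI allI impI)
  show "(0::real) < 1/8" by simp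
  fix n :: nat assume n1: "1 \<le> n"
  define E where "E = {A. \<exists>\<phi> :: bool list \<Rightarrow> bool list.
            inj_on \<phi> (cube (n - 1)) \<and> \<phi> ` cube (n - 1) \<subseteq> cube n \<and>
            (\<forall>x\<in>cube (n - 1). hamming x (take (n - 1) (\<phi> x)) \<le> 1) \<and>
            measure_pmf.prob (pmf_of_set (cube (n - 1))) {x. \<phi> x \<in> A} \<ge> 1 - 40 / real n}"
  let ?S = "Pow (cube n)"
  have cS: "real (card ?S) > 0" by (simp add: card_Pow_cube)
  show "measure_pmf.prob (pmf_of_set ?S) E \<ge> 1 - 2 powr (- (2 powr (1/8 * real n)))"
  proof (cases "n < 40")
    case True
    have "?S \<subseteq> E"
    proof
      fix A assume "A \<in> ?S"
      let ?p = "\<lambda>x::bool list. x @ [True]"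
      have "inj_on ?p (cube (n-1))" by (rule inj_onI) simp
      moreover have "?p ` cube (n - 1) \<subseteq> cube n" using n1 by (auto simp: cube_def)
      moreover have "\<forall>x\<in>cube (n - 1). hamming x (take (n - 1) (?p x)) \<le> 1"
        by (auto simp: cube_def hamming_refl)
      moreover have "measure_pmf.prob (pmf_of_set (cube (n - 1))) {x. ?p x \<in> A} \<ge> 1 - 40 / real n"
      proof -
        have "1 - 40 / real n \<le> 0" using True n1 by (simp add: field_simps)
        then show ?thesis by (meson measure_nonneg order_trans)
      qed
      ultimately show "A \<in> E" unfolding E_def by blast
    qed
    then have "?S \<inter> E = ?S" by blast
    moreover have "?S \<noteq> {}" by blast
    ultimately have "measure_pmf.prob (pmf_of_set ?S) E = 1" using cS by (simp add: prob_set)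
    then show ?thesis by simp
  next
    case False
    then have n40: "40 \<le> n" by simp
    define K where "K = (n-1) div 2"
    define j where "j = n - 1 - K"
    have nn: "n = j + Suc K" using n1 by (simp add: K_def j_def)
    define Bad where "Bad = {A\<in>Pow (cube (j + Suc K)). 3 * 2^j / (real K + 4) \<le> Z K j A}"
    have "?S - Bad \<subseteq> ?S \<inter> E"
    proof
      fix A assume A: "A \<in> ?S - Bad"
      then have "A \<in> ?S" "\<not> (3 * 2^j / (real K + 4) \<le> Z K j A)"
        unfolding Bad_def using nn by auto
      from good_large[OF n40 K_def j_def this] have "A \<in> E" unfolding E_def by blast
      then show "A \<in> ?S \<inter> E" using A by blast
    qed
    then have "card (?S - Bad) \<le> card (?S \<inter> E)" by (intro card_mono) auto
    moreover have "card (?S - Bad) = card ?S - card Bad"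
      by (rule card_Diff_subset) (auto simp: Bad_def nn)
    moreover have "card Bad \<le> card ?S" by (rule card_mono) (auto simp: Bad_def nn)
    ultimately have c1: "real (card ?S) - real (card Bad) \<le> real (card (?S \<inter> E))" by linarith
    have tl: "real (card Bad) \<le> real (card ?S) * 2 powr (- (2^j / (real K + 4)))"
      using tail[of j K] unfolding Bad_def nn .
    have "2 powr (- (2^j / (real K + 4))) \<le> 2 powr (- (2 powr (1/8 * real n)))"
      using exponent_bound[OF n40 K_def j_def] by (intro powr_mono) auto
    then have "real (card ?S) * 2 powr (- (2^j / (real K + 4))) \<le> real (card ?S) * 2 powr (- (2 powr (1/8 * real n)))"
      by (rule mult_left_mono) simp
    then have "real (card Bad) \<le> real (card ?S) * 2 powr (- (2 powr (1/8 * real n)))"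
      using tl by linarith
    then have "real (card ?S) * (1 - 2 powr (- (2 powr (1/8 * real n)))) \<le> real (card (?S \<inter> E))"
      using c1 by (simp add: algebra_simps)
    then have "1 - 2 powr (- (2 powr (1/8 * real n))) \<le> real (card (?S \<inter> E)) / real (card ?S)"
      using cS by (simp add: le_divide_eq mult.commute)
    then show ?thesis by (simp add: prob_set)
  qed
qed

end
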